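(* Let $(\sigma_n)_{n=1}^\infty$ be a strictly increasing sequence of positive integers with $\sigma_{n+1}\ge\sigma_n+n$ for all $n\ge1$ and $\lim_{n\to\infty}\frac{\sigma_{n+1}-\sigma_n}{n}=\beta$ for some real $\beta\ge1$. Let \[G((\sigma_n)_{n=1}^\infty)=\{x\in J\colon a_{\sigma_n}(x),\ldots,a_{\sigma_n+n-1}(x)\ \text{is an arithmetic progression for all sufficiently large}\ n\}.\] Then $\dim_{\rm H} G((\sigma_n)_{n=1}^\infty)\le\frac{\beta-1}{2\beta}$.
   Context: Every irrational $x\in(0,1)$ has a regular continued fraction expansion with partial quotients $a_n(x)\in\mathbb N$, $n\ge1$. $J=\{x\in(0,1)\setminus\mathbb Q\colon a_n(x)<a_{n+1}(x)\text{ for every }n\ge1\}$. $\dim_{\rm H}$ denotes Hausdorff dimension in $[0,1]$. *)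

theory Defs
  imports "HOL-Analysis.Analysis"
begin

definition gauss_map :: "real \<Rightarrow> real" where
  "gauss_map x = (if x = 0 then 0 else frac (1 / x))"

definition cf_quot :: "real \<Rightarrow> nat \<Rightarrow> nat" where
  "cf_quot x n = nat \<lfloor>1 / ((gauss_map ^^ (n - 1)) x)\<rfloor>"

definition J_set :: "real set" where
  "J_set = {x. 0 < x \<and> x < 1 \<and> x \<notin> \<rat> \<and> (\<forall>n\<ge>1. cf_quot x n < cf_quot x (Suc n))}"

definition arith_prog :: "(nat \<Rightarrow> nat) \<Rightarrow> nat \<Rightarrow> nat \<Rightarrow> bool" where
  "arith_prog f m n \<longleftrightarrow> (\<exists>d::int. \<forall>i<n. int (f (m + i)) = int (f m) + int i * d)"

definition hausdorff_pre :: "real \<Rightarrow> real \<Rightarrow> real set \<Rightarrow> ennreal" where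
  "hausdorff_pre s \<delta> E =
     (INF U \<in> {U :: nat \<Rightarrow> real set. E \<subseteq> (\<Union>i. U i) \<and>
                 (\<forall>i. bounded (U i) \<and> diameter (U i) \<le> \<delta>)}.
        \<Sum>i. ennreal (diameter (U i) powr s))"

definition hausdorff_measure :: "real \<Rightarrow> real set \<Rightarrow> ennreal" where
  "hausdorff_measure s E = (SUP \<delta> \<in> {0<..}. hausdorff_pre s \<delta> E)"

definition hausdorff_dim :: "real set \<Rightarrow> ereal" where
  "hausdorff_dim E = Inf {ereal s | s. 0 \<le> s \<and> hausdorff_measure s E = 0}"

definition G_set :: "(nat \<Rightarrow> nat) \<Rightarrow> real set" where
  "G_set \<sigma> = {x \<in> J_set. \<forall>\<^sub>F n in sequentially. arith_prog (cf_quot x) (\<sigma> n) n}"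

end

theory Submission
  imports Defs
begin

abbreviation "Cov \<delta> E \<equiv> {U :: nat \<Rightarrow> real set. E \<subseteq> (\<Union>i. U i) \<and>
                 (\<forall>i. bounded (U i) \<and> diameter (U i) \<le> \<delta>)}"

lemma hp_mono: "E \<subseteq> F \<Longrightarrow> hausdorff_pre s \<delta> E \<le> hausdorff_pre s \<delta> F"
  unfolding hausdorff_pre_def by (rule INF_superset_mono) auto

lemma hp_single:
  assumes "bounded S" "diameter S \<le> \<delta>" "0 \<le> \<delta>"
  shows "hausdorff_pre s \<delta> S \<le> ennreal (diameter S powr s)"
proof -
  let ?U = "\<lambda>i::nat. if i = 0 then S else {}"
  have "?U \<in> Cov \<delta> S" using assms by auto
  hence "hausdorff_pre s \<delta> S \<le> (\<Sum>i. ennreal (diameter (?U i) powr s))"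
    unfolding hausdorff_pre_def by (rule INF_lower)
  also have "(\<Sum>i. ennreal (diameter (?U i) powr s)) = (\<Sum>i<1. ennreal (diameter (?U i) powr s))"
    by (rule suminf_finite) auto
  finally show ?thesis by simp
qed

lemma hp_empty: "0 \<le> \<delta> \<Longrightarrow> hausdorff_pre s \<delta> {} = 0"
  using hp_single[of "{}" \<delta> s] by simp

lemma ennreal_lt_add: "x < top \<Longrightarrow> 0 < e \<Longrightarrow> x < x + ennreal (e::real)"
proof -
  assume a: "x < top" "0 < e"
  then obtain r where r: "0 \<le> r" "x = ennreal r" using less_top_ennreal by blast
  have "ennreal r < ennreal (r + e)" using a r by (intro ennreal_lessI) auto
  thus ?thesis using r a by (simp add: ennreal_plus)
qed

lemma half_sum_ennreal: "(\<Sum>i. ennreal (e * (1/2)^Suc i)) = ennreal e" if "0 \<le> e" for e :: real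
proof -
  have "(\<lambda>i. e * (1/2)^Suc i) sums (e * 1)"
    by (rule sums_mult[OF power_half_series])
  thus ?thesis using that by (subst suminf_ennreal2) (auto simp: sums_iff)
qed

lemma hp_sub:
  fixes E :: "nat \<Rightarrow> real set"
  shows "hausdorff_pre s \<delta> (\<Union>i. E i) \<le> (\<Sum>i. hausdorff_pre s \<delta> (E i))"
proof (rule ennreal_le_epsilon)
  fix e :: real assume fin: "(\<Sum>i. hausdorff_pre s \<delta> (E i)) < top" and e: "0 < e"
  have "\<forall>i. \<exists>U. U \<in> Cov \<delta> (E i) \<and> (\<Sum>l. ennreal (diameter (U l) powr s)) <
          hausdorff_pre s \<delta> (E i) + ennreal (e * (1/2)^Suc i)"
  proof
    fix i
    have "hausdorff_pre s \<delta> (E i) < top"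
      by (rule ennreal_suminf_lessD[OF fin])
    hence "hausdorff_pre s \<delta> (E i) < hausdorff_pre s \<delta> (E i) + ennreal (e * (1/2)^Suc i)"
      by (rule ennreal_lt_add) (use e in simp)
    thus "\<exists>U. U \<in> Cov \<delta> (E i) \<and> (\<Sum>l. ennreal (diameter (U l) powr s)) <
          hausdorff_pre s \<delta> (E i) + ennreal (e * (1/2)^Suc i)"
      unfolding hausdorff_pre_def[of s \<delta> "E i"] INF_less_iff by blast
  qed
  from choice[OF this] obtain V where V0: "\<forall>i. V i \<in> Cov \<delta> (E i) \<and> (\<Sum>l. ennreal (diameter (V i l) powr s)) <
          hausdorff_pre s \<delta> (E i) + ennreal (e * (1/2)^Suc i)" by (elim exE)
  have V: "\<And>i. V i \<in> Cov \<delta> (E i)"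
    "\<And>i. (\<Sum>l. ennreal (diameter (V i l) powr s)) <
          hausdorff_pre s \<delta> (E i) + ennreal (e * (1/2)^Suc i)"
    using V0 by blast+
  define W where "W j = V (fst (prod_decode j)) (snd (prod_decode j))" for j
  have "W \<in> Cov \<delta> (\<Union>i. E i)"
  proof safe
    fix x i assume "x \<in> E i"
    then obtain l where "x \<in> V i l" using V(1)[of i] by blast
    moreover have "W (prod_encode (i, l)) = V i l"
      unfolding W_def by (simp only: prod_encode_inverse fst_conv snd_conv)
    ultimately have "x \<in> W (prod_encode (i, l))" by simp
    thus "x \<in> (\<Union>j. W j)" by blast
  next
    fix j show "bounded (W j)" "diameter (W j) \<le> \<delta>"
      using V(1) unfolding W_def by blast+
  qed
  hence "hausdorff_pre s \<delta> (\<Union>i. E i) \<le> (\<Sum>j. ennreal (diameter (W j) powr s))"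
    unfolding hausdorff_pre_def by (rule INF_lower)
  also have "\<dots> = (\<Sum>i. (\<Sum>l. ennreal (diameter (V i l) powr s)))"
    unfolding W_def
    by (rule suminf_ennreal_2dimen[where f = "\<lambda>p. ennreal (diameter (V (fst p) (snd p)) powr s)"]) simp
  also have "\<dots> \<le> (\<Sum>i. hausdorff_pre s \<delta> (E i) + ennreal (e * (1/2)^Suc i))"
    by (intro suminf_le less_imp_le V(2) summableI)
  also have "\<dots> = (\<Sum>i. hausdorff_pre s \<delta> (E i)) + (\<Sum>i. ennreal (e * (1/2)^Suc i))"
    by (rule suminf_add[symmetric]) auto
  also have "\<dots> = (\<Sum>i. hausdorff_pre s \<delta> (E i)) + ennreal e"
    by (simp only: half_sum_ennreal[OF less_imp_le[OF e]])
  finally show "hausdorff_pre s \<delta> (\<Union>i. E i) \<le> (\<Sum>i. hausdorff_pre s \<delta> (E i)) + ennreal e" .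
qed

definition Xs :: "real set" where "Xs = {x. 0 < x \<and> x < 1 \<and> x \<notin> \<rat>}"

lemma gm_X: assumes "x \<in> Xs" shows "gauss_map x \<in> Xs"
proof -
  have x: "0 < x" "x < 1" "x \<notin> \<rat>" using assms by (auto simp: Xs_def)
  have r: "1/x \<notin> \<rat>"
  proof
    assume "1/x \<in> \<rat>" hence "1/(1/x) \<in> \<rat>" by (rule Rats_divide[OF Rats_1])
    thus False using x by simp
  qed
  have "frac (1/x) \<notin> \<rat>"
  proof
    assume "frac (1/x) \<in> \<rat>"
    hence "frac (1/x) + of_int \<lfloor>1/x\<rfloor> \<in> \<rat>" by simp
    thus False using r by (simp add: frac_def)
  qed
  moreover have "frac (1/x) \<noteq> 0" using calculation by (metis Rats_0)
  moreover have "frac (1/x) < 1" by (rule frac_lt_1)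
  moreover have "0 \<le> frac (1/x)" by (rule frac_ge_0)
  ultimately show ?thesis using x unfolding Xs_def gauss_map_def by auto
qed

lemma gm_iter_X: "x \<in> Xs \<Longrightarrow> (gauss_map ^^ n) x \<in> Xs"
  by (induction n) (auto simp: gm_X)

lemma cf_shift: "1 \<le> n \<Longrightarrow> cf_quot x (Suc n) = cf_quot (gauss_map x) n"
proof -
  assume "1 \<le> n"
  then obtain m where m: "n = Suc m" by (cases n) auto
  show ?thesis unfolding cf_quot_def m by (simp add: funpow_Suc_right del: funpow.simps)
qed

lemma cf_quot_pos_aux: "y \<in> Xs \<Longrightarrow> 1 \<le> nat \<lfloor>1 / y\<rfloor>"
proof -
  assume "y \<in> Xs"
  hence "0 < y" "y < 1" by (auto simp: Xs_def)
  hence "1 \<le> 1 / y" by simp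
  thus ?thesis by linarith
qed

lemma cf_quot_pos: "x \<in> Xs \<Longrightarrow> 1 \<le> cf_quot x n"
  unfolding cf_quot_def by (rule cf_quot_pos_aux[OF gm_iter_X])

lemma cf_first: assumes "x \<in> Xs"
  shows "x = 1 / (real (cf_quot x 1) + gauss_map x)"
proof -
  have x: "0 < x" using assms by (auto simp: Xs_def)
  have "real (cf_quot x 1) = of_int \<lfloor>1/x\<rfloor>"
    using cf_quot_pos_aux[OF assms] by (simp add: cf_quot_def)
  hence "real (cf_quot x 1) + gauss_map x = 1/x"
    using x by (simp add: gauss_map_def frac_def)
  thus ?thesis using x by simp
qed

lemma cf_dist:
  assumes "x \<in> Xs" "y \<in> Xs" "\<forall>i. 1 \<le> i \<and> i \<le> k \<longrightarrow> cf_quot x i = cf_quot y i"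
  shows "\<bar>x - y\<bar> \<le> 1 / (\<Prod>i<k. real (cf_quot x (Suc i)))^2"
  using assms
proof (induction k arbitrary: x y)
  case 0
  thus ?case by (auto simp: Xs_def)
next
  case (Suc k)
  define a where "a = real (cf_quot x 1)"
  have a1: "1 \<le> a" using cf_quot_pos[OF Suc.prems(1)] a_def by simp
  have ay: "a = real (cf_quot y 1)" using Suc.prems(3) a_def by auto
  have gx: "gauss_map x \<in> Xs" and gy: "gauss_map y \<in> Xs" using Suc.prems gm_X by auto
  have gx0: "0 \<le> gauss_map x" "0 \<le> gauss_map y" using gx gy by (auto simp: Xs_def)
  have xe: "x = 1 / (a + gauss_map x)" using cf_first[OF Suc.prems(1)] a_def by simp
  have ye: "y = 1 / (a + gauss_map y)" using cf_first[OF Suc.prems(2)] ay by simp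
  have sh: "\<forall>i. 1 \<le> i \<and> i \<le> k \<longrightarrow> cf_quot (gauss_map x) i = cf_quot (gauss_map y) i"
    using Suc.prems(3) by (metis Suc_le_mono cf_shift le_SucI)
  have IH: "\<bar>gauss_map x - gauss_map y\<bar> \<le> 1 / (\<Prod>i<k. real (cf_quot (gauss_map x) (Suc i)))^2"
    by (rule Suc.IH[OF gx gy sh])
  have pr: "(\<Prod>i<Suc k. real (cf_quot x (Suc i))) = a * (\<Prod>i<k. real (cf_quot (gauss_map x) (Suc i)))"
    unfolding prod.lessThan_Suc_shift a_def by (simp add: cf_shift)
  define P where "P = (\<Prod>i<k. real (cf_quot (gauss_map x) (Suc i)))"
  have P0: "0 < P" unfolding P_def using cf_quot_pos[OF gx]
    by (intro prod_pos) (auto intro: less_le_trans[OF zero_less_one])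
  have key: "\<And>u v. 0 \<le> u \<Longrightarrow> 0 \<le> v \<Longrightarrow> 1/(a+u) - 1/(a+v) = (v - u) / ((a+u)*(a+v))"
    using a1 by (simp add: divide_simps)
  have "x - y = (gauss_map y - gauss_map x) / ((a + gauss_map x) * (a + gauss_map y))"
    using key[OF gx0] xe ye by simp
  hence "\<bar>x - y\<bar> = \<bar>gauss_map y - gauss_map x\<bar> / ((a + gauss_map x) * (a + gauss_map y))"
    using a1 gx0 by (simp add: abs_divide abs_mult)
  also have "\<dots> \<le> \<bar>gauss_map x - gauss_map y\<bar> / (a * a)"
    using a1 gx0 by (subst abs_minus_commute, intro divide_left_mono mult_mono mult_pos_pos) auto
  also have "\<dots> \<le> (1 / P^2) / (a * a)"
    using IH a1 unfolding P_def by (intro divide_right_mono) auto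
  also have "\<dots> = 1 / (a * P)^2" by (simp add: power2_eq_square)
  finally show ?case unfolding pr P_def .
qed

lemma tele_ineq:
  fixes E c :: real
  assumes E: "1 < E" and c: "1 \<le> c"
  shows "(E-1) * (c+1) powr (-E) \<le> c powr (1-E) - (c+1) powr (1-E)"
proof -
  have der: "\<And>x. c \<le> x \<Longrightarrow> x \<le> c+1 \<Longrightarrow> DERIV (\<lambda>t. t powr (1-E)) x :> (1-E) * x powr (1-E-1)"
    using c by (intro has_real_derivative_powr) auto
  obtain z where z: "c < z" "z < c+1" "(c+1) powr (1-E) - c powr (1-E) = ((c+1) - c) * ((1-E) * z powr (1-E-1))"
    using MVT2[of c "c+1" "\<lambda>t. t powr (1-E)", OF _ der] by auto
  have "(c+1) powr (-E) \<le> z powr (-E)"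
    using z c E by (intro powr_mono2') auto
  hence "(E-1) * (c+1) powr (-E) \<le> (E-1) * z powr (-E)"
    using E by (intro mult_left_mono) auto
  also have "\<dots> = c powr (1-E) - (c+1) powr (1-E)"
    using z(3) by (simp add: algebra_simps)
  finally show ?thesis .
qed

lemma tail_partial:
  fixes E :: real and b :: nat
  assumes E: "1 < E" and b: "1 \<le> b"
  shows "(E-1) * (\<Sum>a<n. if b < a then real a powr (-E) else 0)
           \<le> real b powr (1-E) - real (max b (n-1)) powr (1-E)"
proof (induction n)
  case 0 thus ?case by simp
next
  case (Suc n)
  show ?case
  proof (cases "b < n")
    case True
    hence mx: "max b (Suc n - 1) = n" "max b (n-1) = n - 1" by auto
    have n1: "real n = real (n-1) + 1" using True by auto
    have "(E-1) * (real n) powr (-E) \<le> real (n-1) powr (1-E) - real n powr (1-E)"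
      using tele_ineq[OF E, of "real (n-1)"] True b unfolding n1 by auto
    thus ?thesis using Suc.IH True unfolding mx by (simp add: distrib_left)
  next
    case False
    hence mx: "max b (Suc n - 1) = b" "max b (n-1) = b" by auto
    show ?thesis using Suc.IH False unfolding mx by simp
  qed
qed

lemma ennreal_series_le:
  fixes f :: "nat \<Rightarrow> real"
  assumes "\<And>a. 0 \<le> f a" "\<And>n. (\<Sum>a<n. f a) \<le> B"
  shows "(\<Sum>a. ennreal (f a)) \<le> ennreal B"
proof (rule suminf_le_const)
  fix n
  have "(\<Sum>a<n. ennreal (f a)) = ennreal (\<Sum>a<n. f a)" using assms(1) by simp
  also have "\<dots> \<le> ennreal B" using assms(2) by (rule ennreal_leI)
  finally show "(\<Sum>a<n. ennreal (f a)) \<le> ennreal B" .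
qed auto

lemma tail_ennreal:
  fixes E :: real and b :: nat
  assumes E: "1 < E" and b: "1 \<le> b"
  shows "(\<Sum>a. ennreal (if b < a then real a powr (-E) else 0)) \<le> ennreal (real b powr (1-E) / (E-1))"
proof (rule ennreal_series_le)
  fix n
  have "(E-1) * (\<Sum>a<n. if b < a then real a powr (-E) else 0) \<le> real b powr (1-E)"
    using tail_partial[OF E b, of n] powr_ge_zero[of "real (max b (n-1))" "1-E"] by linarith
  thus "(\<Sum>a<n. if b < a then real a powr (-E) else 0) \<le> real b powr (1-E) / (E-1)"
    using E by (simp add: field_simps)
qed auto

lemma zeta_partial:
  fixes E :: real
  assumes E: "2 \<le> E"
  shows "(\<Sum>a<n. if 0 < a then real a powr (-E) else 0) \<le> 2"
proof -
  have eq: "(\<Sum>a<n. if 0 < a then real a powr (-E) else 0) =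
        (\<Sum>a<n. if a = 1 then 1 else 0) + (\<Sum>a<n. if 1 < a then real a powr (-E) else 0)"
    by (subst sum.distrib[symmetric], rule sum.cong, simp) (case_tac "x = 1", auto)
  have "(\<Sum>a<n. if a = (1::nat) then 1 else 0) \<le> (1::real)"
    by (cases "1 < n") (auto simp: sum.delta)
  moreover have "(E-1) * (\<Sum>a<n. if 1 < a then real a powr (-E) else 0) \<le> 1"
  proof -
    have t: "(E-1) * (\<Sum>a<n. if 1 < a then real a powr (-E) else 0) \<le> real (1::nat) powr (1-E) - real (max 1 (n-1)) powr (1-E)"
      by (rule tail_partial) (use E in auto)
    have "real (1::nat) powr (1-E) = 1" by simp
    thus ?thesis using t powr_ge_zero[of "real (max 1 (n-1))" "1-E"] by linarith
  qed
  hence "(\<Sum>a<n. if 1 < a then real a powr (-E) else 0) \<le> 1"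
    using E by (smt (verit) mult_le_cancel_right1 mult.commute sum_nonneg powr_ge_zero)
  ultimately show ?thesis unfolding eq by linarith
qed

lemma zeta_ennreal:
  fixes E :: real
  assumes E: "2 \<le> E"
  shows "(\<Sum>a. ennreal (if 0 < a then real a powr (-E) else 0)) \<le> 2"
proof -
  have "(\<Sum>a. ennreal (if 0 < a then real a powr (-E) else 0)) \<le> ennreal 2"
    by (rule ennreal_series_le) (use zeta_partial[OF E] in auto)
  thus ?thesis by simp
qed

definition Gs :: "(nat \<Rightarrow> nat) \<Rightarrow> nat \<Rightarrow> real set" where
  "Gs \<sigma> N = {x \<in> Xs. (\<forall>i\<ge>1. cf_quot x i < cf_quot x (Suc i)) \<and> (\<forall>m\<ge>N. arith_prog (cf_quot x) (\<sigma> m) m)}"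

definition Ek :: "(nat \<Rightarrow> nat) \<Rightarrow> nat \<Rightarrow> nat \<Rightarrow> (nat \<Rightarrow> nat) \<Rightarrow> real set" where
  "Ek \<sigma> N k u = {x \<in> Gs \<sigma> N. \<forall>i. 1 \<le> i \<and> i \<le> k \<longrightarrow> cf_quot x i = u i}"

definition Prd :: "(nat \<Rightarrow> nat) \<Rightarrow> nat \<Rightarrow> real" where
  "Prd u k = (\<Prod>i<k. real (u (Suc i)))"

definition Qp :: "(nat \<Rightarrow> nat) \<Rightarrow> nat \<Rightarrow> real \<Rightarrow> real \<Rightarrow> nat \<Rightarrow> real \<Rightarrow> real \<Rightarrow> bool" where
  "Qp \<sigma> N s \<delta> k g C \<longleftrightarrow> (\<forall>u. (\<forall>i. 1 \<le> i \<and> i \<le> k \<longrightarrow> 1 \<le> u i) \<longrightarrow>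
      hausdorff_pre s \<delta> (Ek \<sigma> N k u) \<le> ennreal (Prd u k powr (- (2 * s)) * C * real (u k) powr (- g)))"

lemma Prd_pos: "(\<forall>i. 1 \<le> i \<and> i \<le> k \<longrightarrow> 1 \<le> u i) \<Longrightarrow> 0 < Prd u k"
  unfolding Prd_def by (intro prod_pos) (auto simp: Suc_le_eq)

lemma Prd_Suc: "Prd (u(Suc k := a)) (Suc k) = Prd u k * real a"
  unfolding Prd_def by (simp add: prod.lessThan_Suc)

lemma Gs_digit_ge: "x \<in> Gs \<sigma> N \<Longrightarrow> 1 \<le> i \<Longrightarrow> i \<le> cf_quot x i"
proof (induction i)
  case 0 thus ?case by simp
next
  case (Suc i)
  show ?case
  proof (cases "i = 0")
    case True thus ?thesis using cf_quot_pos[of x "Suc 0"] Suc.prems by (simp add: Gs_def)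
  next
    case False
    hence "i \<le> cf_quot x i" using Suc by auto
    moreover have "cf_quot x i < cf_quot x (Suc i)" using Suc.prems False by (auto simp: Gs_def)
    ultimately show ?thesis by simp
  qed
qed

lemma Gs_incr: "x \<in> Gs \<sigma> N \<Longrightarrow> 1 \<le> i \<Longrightarrow> cf_quot x i < cf_quot x (Suc i)"
  by (auto simp: Gs_def)

lemma Prd_ge_last: assumes "\<forall>i. 1 \<le> i \<and> i \<le> k \<longrightarrow> 1 \<le> u i" "1 \<le> k"
  shows "real (u k) \<le> Prd u k"
proof -
  obtain j where j: "k = Suc j" using assms(2) by (cases k) auto
  have "Prd u k = (\<Prod>i<j. real (u (Suc i))) * real (u k)"
    unfolding Prd_def j by (simp add: prod.lessThan_Suc)
  moreover have "1 \<le> (\<Prod>i<j. real (u (Suc i)))"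
    using assms(1) j by (intro prod_ge_1) auto
  moreover have "0 \<le> real (u k)" by simp
  ultimately show ?thesis by (metis mult_le_cancel_right1 mult.commute less_le_not_le mult_le_cancel_left1)
qed

lemma Ek_sub_Xs: "Ek \<sigma> N k u \<subseteq> Xs" by (auto simp: Ek_def Gs_def)

lemma bounded_Xs_sub: "S \<subseteq> Xs \<Longrightarrow> bounded S"
  by (rule bounded_subset[OF bounded_cball[of 0 1]]) (auto simp: Xs_def dist_real_def)

lemma powr_inv_sq: "0 < P \<Longrightarrow> (1 / P^2) powr s = P powr (- (2 * s))" for P s :: real
proof -
  assume P: "0 < P"
  have "P^2 = P powr (real 2)" using P by (simp add: powr_realpow)
  hence "(1 / P^2) powr s = 1 / ((P powr 2) powr s)" using P by (simp add: powr_divide)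
  also have "\<dots> = P powr (- (2 * s))" by (simp add: powr_powr powr_minus_divide)
  finally show ?thesis .
qed

lemma Q_end:
  assumes s: "0 < s" and L: "1 \<le> L" and d: "1 / (real L)^2 \<le> \<delta>"
  shows "Qp \<sigma> N s \<delta> L 0 1"
  unfolding Qp_def
proof (intro allI impI)
  fix u :: "nat \<Rightarrow> nat" assume pos: "\<forall>i. 1 \<le> i \<and> i \<le> L \<longrightarrow> 1 \<le> u i"
  have d0: "0 \<le> \<delta>" using d by (meson divide_nonneg_nonneg order_trans zero_le_one zero_le_power2)
  let ?E = "Ek \<sigma> N L u"
  let ?P = "Prd u L"
  have P0: "0 < ?P" using Prd_pos[OF pos] .
  have uL: "u L \<noteq> 0" using pos L by (metis not_one_le_zero order_refl)
  show "hausdorff_pre s \<delta> ?E \<le> ennreal (?P powr (- (2 * s)) * 1 * real (u L) powr (- 0))"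
  proof (cases "?E = {}")
    case True thus ?thesis using hp_empty[OF d0] by simp
  next
    case False
    then obtain x0 where x0: "x0 \<in> ?E" by blast
    have "L \<le> cf_quot x0 L" using x0 L by (intro Gs_digit_ge) (auto simp: Ek_def)
    hence "real L \<le> real (u L)" using x0 L by (auto simp: Ek_def)
    also have "\<dots> \<le> ?P" by (rule Prd_ge_last[OF pos L])
    finally have LP: "real L \<le> ?P" .
    have dm: "diameter ?E \<le> 1 / ?P^2"
    proof (rule diameter_le)
      fix x y assume xy: "x \<in> ?E" "y \<in> ?E"
      have "\<bar>x - y\<bar> \<le> 1 / (\<Prod>i<L. real (cf_quot x (Suc i)))^2"
        using xy by (intro cf_dist) (auto simp: Ek_def Gs_def)
      also have "(\<Prod>i<L. real (cf_quot x (Suc i))) = ?P"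
        unfolding Prd_def using xy(1) by (intro prod.cong) (auto simp: Ek_def)
      finally show "norm (x - y) \<le> 1 / ?P^2" by simp
    qed (use False in auto)
    have "1 / ?P^2 \<le> 1 / (real L)^2"
      using LP L by (intro divide_left_mono power_mono mult_pos_pos) auto
    hence dd: "diameter ?E \<le> \<delta>" using dm d by linarith
    have bE: "bounded ?E" by (rule bounded_Xs_sub[OF Ek_sub_Xs])
    have "hausdorff_pre s \<delta> ?E \<le> ennreal (diameter ?E powr s)"
      by (rule hp_single[OF bE dd d0])
    also have "\<dots> \<le> ennreal ((1 / ?P^2) powr s)"
      using dm s bE by (intro ennreal_leI powr_mono2) (auto simp: diameter_ge_0)
    also have "(1 / ?P^2) powr s = ?P powr (- (2 * s))" by (rule powr_inv_sq[OF P0])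
    finally show ?thesis using uL by simp
  qed
qed

lemma Q_free:
  assumes k: "1 \<le> k" and g: "2 \<le> g + 2 * s" and C: "0 \<le> C" and d0: "0 \<le> \<delta>"
    and Q: "Qp \<sigma> N s \<delta> (Suc k) g C"
  shows "Qp \<sigma> N s \<delta> k (g + 2 * s - 1) C"
  unfolding Qp_def
proof (intro allI impI)
  fix u :: "nat \<Rightarrow> nat" assume pos: "\<forall>i. 1 \<le> i \<and> i \<le> k \<longrightarrow> 1 \<le> u i"
  define b where "b = u k"
  have b1: "1 \<le> b" using pos k b_def by auto
  define w where "w = Prd u k powr (- (2 * s))"
  have w0: "0 \<le> w" unfolding w_def by simp
  define f where "f a = (if b < a then real a powr (- (g + 2 * s)) else 0)" for a :: nat
  have cover: "Ek \<sigma> N k u \<subseteq> (\<Union>a. Ek \<sigma> N (Suc k) (u(Suc k := a)))"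
  proof
    fix x assume x: "x \<in> Ek \<sigma> N k u"
    hence "x \<in> Ek \<sigma> N (Suc k) (u(Suc k := cf_quot x (Suc k)))"
      by (auto simp: Ek_def le_Suc_eq)
    thus "x \<in> (\<Union>a. Ek \<sigma> N (Suc k) (u(Suc k := a)))" by blast
  qed
  have each: "hausdorff_pre s \<delta> (Ek \<sigma> N (Suc k) (u(Suc k := a))) \<le> ennreal (w * C) * ennreal (f a)" for a
  proof (cases "b < a")
    case False
    have "Ek \<sigma> N (Suc k) (u(Suc k := a)) = {}"
    proof (rule ccontr)
      assume "Ek \<sigma> N (Suc k) (u(Suc k := a)) \<noteq> {}"
      then obtain x where x: "x \<in> Ek \<sigma> N (Suc k) (u(Suc k := a))" by blast
      hence "cf_quot x k < cf_quot x (Suc k)" using k by (intro Gs_incr) (auto simp: Ek_def)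
      moreover have "cf_quot x k = b" "cf_quot x (Suc k) = a" using x k b_def by (auto simp: Ek_def)
      ultimately show False using False by simp
    qed
    thus ?thesis using hp_empty[OF d0] by simp
  next
    case True
    let ?u = "u(Suc k := a)"
    have pos': "\<forall>i. 1 \<le> i \<and> i \<le> Suc k \<longrightarrow> 1 \<le> ?u i" using pos True b1 by (auto simp: le_Suc_eq)
    have "hausdorff_pre s \<delta> (Ek \<sigma> N (Suc k) ?u) \<le> ennreal (Prd ?u (Suc k) powr (- (2 * s)) * C * real (?u (Suc k)) powr (- g))"
      using Q pos' unfolding Qp_def by blast
    also have "Prd ?u (Suc k) powr (- (2 * s)) * C * real (?u (Suc k)) powr (- g) = w * C * f a"
      using True unfolding Prd_Suc w_def f_def
      by (simp add: powr_mult powr_add[symmetric] algebra_simps)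
    also have "ennreal (w * C * f a) = ennreal (w * C) * ennreal (f a)"
      by (rule ennreal_mult') (use w0 C in simp)
    finally show ?thesis .
  qed
  have "hausdorff_pre s \<delta> (Ek \<sigma> N k u) \<le> hausdorff_pre s \<delta> (\<Union>a. Ek \<sigma> N (Suc k) (u(Suc k := a)))"
    by (rule hp_mono[OF cover])
  also have "\<dots> \<le> (\<Sum>a. hausdorff_pre s \<delta> (Ek \<sigma> N (Suc k) (u(Suc k := a))))"
    by (rule hp_sub)
  also have "\<dots> \<le> (\<Sum>a. ennreal (w * C) * ennreal (f a))"
    by (intro suminf_le each summableI)
  also have "\<dots> = ennreal (w * C) * (\<Sum>a. ennreal (f a))" by simp
  also have "\<dots> \<le> ennreal (w * C) * ennreal (real b powr (1 - (g + 2 * s)) / ((g + 2 * s) - 1))"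
    unfolding f_def using g b1 by (intro mult_left_mono tail_ennreal) auto
  also have "\<dots> = ennreal (w * C * (real b powr (1 - (g + 2 * s)) / ((g + 2 * s) - 1)))"
    by (rule ennreal_mult'[symmetric]) (use w0 C in simp)
  also have "\<dots> \<le> ennreal (w * C * real b powr (- (g + 2 * s - 1)))"
  proof (intro ennreal_leI mult_left_mono)
    have "real b powr (1 - (g + 2 * s)) / ((g + 2 * s) - 1) \<le> real b powr (1 - (g + 2 * s)) / 1"
      using g by (intro divide_left_mono) auto
    thus "real b powr (1 - (g + 2 * s)) / ((g + 2 * s) - 1) \<le> real b powr (- (g + 2 * s - 1))"
      by (simp add: algebra_simps)
  qed (use w0 C in auto)
  finally show "hausdorff_pre s \<delta> (Ek \<sigma> N k u) \<le> ennreal (Prd u k powr (- (2 * s)) * C * real (u k) powr (- (g + 2 * s - 1)))"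
    unfolding w_def b_def .
qed

lemma prod_split_add: "(\<Prod>i<k+m. f i) = (\<Prod>i<k. f i) * (\<Prod>j<m. f (k+j))" for f :: "nat \<Rightarrow> real"
  by (induction m) (simp_all add: prod.lessThan_Suc mult.assoc)

lemma prod_lower:
  assumes A: "1 \<le> A" and d: "1 \<le> d"
  shows "real A ^ (Suc t) * real d ^ K \<le> (\<Prod>j<Suc (K+t). real (A + j*d))"
proof (induction t)
  case 0
  have "real d ^ K = (\<Prod>j<K. real d)" by simp
  also have "\<dots> \<le> (\<Prod>j<K. real (A + Suc j * d))"
    by (intro prod_mono) auto
  finally have "real A * real d ^ K \<le> real A * (\<Prod>j<K. real (A + Suc j * d))"
    by (intro mult_left_mono) auto
  also have "\<dots> = (\<Prod>j<Suc K. real (A + j*d))"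
    by (subst prod.lessThan_Suc_shift) simp
  finally show ?case by simp
next
  case (Suc t)
  have "real A ^ Suc (Suc t) * real d ^ K = (real A ^ Suc t * real d ^ K) * real A" by simp
  also have "\<dots> \<le> (\<Prod>j<Suc (K+t). real (A + j*d)) * real (A + Suc (K+t) * d)"
    using Suc.IH by (intro mult_mono prod_nonneg) (auto simp del: of_nat_add of_nat_mult)
  also have "\<dots> = (\<Prod>j<Suc (K + Suc t). real (A + j*d))"
    by (simp only: add_Suc_right prod.lessThan_Suc)
  finally show ?case .
qed

lemma ap_digits:
  assumes x: "x \<in> Gs \<sigma> N" and m2: "2 \<le> m" and Nm: "N \<le> m" and k: "Suc k = \<sigma> m" and k1: "1 \<le> k"
  shows "\<forall>j<m. cf_quot x (Suc k + j) = cf_quot x (Suc k) + j * (cf_quot x (Suc (Suc k)) - cf_quot x (Suc k))"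
proof -
  have "arith_prog (cf_quot x) (\<sigma> m) m" using x Nm by (auto simp: Gs_def)
  then obtain D :: int where D: "\<forall>i<m. int (cf_quot x (Suc k + i)) = int (cf_quot x (Suc k)) + int i * D"
    unfolding arith_prog_def k by blast
  have "int (cf_quot x (Suc k + 1)) = int (cf_quot x (Suc k)) + int 1 * D" using D m2 by (intro D[rule_format]) simp
  hence "int (cf_quot x (Suc (Suc k))) = int (cf_quot x (Suc k)) + D" by simp
  moreover have "cf_quot x (Suc k) < cf_quot x (Suc (Suc k))" using x by (intro Gs_incr) auto
  ultimately have "D = int (cf_quot x (Suc (Suc k)) - cf_quot x (Suc k))" by simp
  hence Dd: "D = int (cf_quot x (Suc (Suc k)) - cf_quot x (Suc k))" .
  show ?thesis
  proof (intro allI impI)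
    fix j assume j: "j < m"
    have "int (cf_quot x (Suc k + j)) = int (cf_quot x (Suc k)) + int j * D" using D j by blast
    also have "\<dots> = int (cf_quot x (Suc k) + j * (cf_quot x (Suc (Suc k)) - cf_quot x (Suc k)))"
      unfolding Dd by simp
    finally show "cf_quot x (Suc k + j) = cf_quot x (Suc k) + j * (cf_quot x (Suc (Suc k)) - cf_quot x (Suc k))"
      by (rule of_nat_eq_iff[THEN iffD1])
  qed
qed

lemma powr_pow_nat: "0 < x \<Longrightarrow> (x ^ n) powr r = x powr (real n * r)" for x r :: real
  by (simp add: powr_realpow[symmetric] powr_powr)

lemma block_term_bound:
  fixes P Pi C g s :: real and A d m K :: nat
  assumes P: "0 < P" and A: "1 \<le> A" and d: "1 \<le> d" and C: "0 \<le> C" and s: "0 < s" and g: "0 \<le> g"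
    and Pi: "real A ^ (m - K) * real d ^ K \<le> Pi" and last: "real A \<le> L"
  shows "(P * Pi) powr (- (2 * s)) * C * L powr (- g)
     \<le> P powr (- (2 * s)) * C * (real A powr (- (2 * s * real (m - K) + g)) * real d powr (- (2 * s * real K)))"
proof -
  have A0: "0 < real A" "0 < real d" using A d by auto
  have q0: "0 < real A ^ (m - K) * real d ^ K" using A0 by simp
  have Pi0: "0 < Pi" using q0 Pi by linarith
  have "(P * Pi) powr (- (2 * s)) = P powr (- (2 * s)) * Pi powr (- (2 * s))" by (rule powr_mult)
  moreover have "Pi powr (- (2 * s)) \<le> (real A ^ (m - K) * real d ^ K) powr (- (2 * s))"
    using Pi q0 s by (intro powr_mono2') auto
  moreover have "(real A ^ (m - K) * real d ^ K) powr (- (2 * s)) = real A powr (- (2 * s * real (m - K))) * real d powr (- (2 * s * real K))"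
    using A0 by (simp add: powr_mult powr_pow_nat algebra_simps)
  moreover have "L powr (- g) \<le> real A powr (- g)"
    using last A0 g by (intro powr_mono2') auto
  moreover have "real A powr (- (2 * s * real (m - K) + g)) = real A powr (- (2 * s * real (m - K))) * real A powr (- g)"
    by (simp add: powr_add[symmetric])
  ultimately show ?thesis using C
    by (smt (verit, best) mult.assoc mult.commute mult_left_mono mult_mono powr_ge_zero zero_le_mult_iff)
qed

lemma Q_block:
  assumes m2: "2 \<le> m" and Nm: "N \<le> m" and k: "Suc k = \<sigma> m" and k1: "1 \<le> k" and Km: "K < m"
    and sK: "2 \<le> 2 * s * real K" and s: "0 < s" and g0: "0 \<le> g" and C: "0 \<le> C" and d0: "0 \<le> \<delta>"
    and E3: "3 \<le> 2 * s * real (m - K) + g" and Q: "Qp \<sigma> N s \<delta> (k + m) g C"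
  shows "Qp \<sigma> N s \<delta> k (2 * s * real (m - K) + g - 1) (2 * C / (2 * s * real (m - K) + g - 1))"
  unfolding Qp_def
proof (intro allI impI)
  fix u :: "nat \<Rightarrow> nat" assume pos: "\<forall>i. 1 \<le> i \<and> i \<le> k \<longrightarrow> 1 \<le> u i"
  define E where "E = 2 * s * real (m - K) + g"
  define b where "b = u k"
  have b1: "1 \<le> b" using pos k1 b_def by auto
  define w where "w = Prd u k powr (- (2 * s))"
  have w0: "0 \<le> w" unfolding w_def by simp
  have P0: "0 < Prd u k" by (rule Prd_pos[OF pos])
  define fA where "fA A = (if b < A then real A powr (- E) else 0)" for A :: nat
  define hd where "hd d = (if 0 < d then real d powr (- (2 * s * real K)) else 0)" for d :: nat
  define ext where "ext A d = (\<lambda>i. if k < i \<and> i \<le> k + m then A + (i - k - 1) * d else u i)" for A d :: nat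
  have cover: "Ek \<sigma> N k u \<subseteq> (\<Union>A. \<Union>d. Ek \<sigma> N (k + m) (ext A d))"
  proof
    fix x assume x: "x \<in> Ek \<sigma> N k u"
    define A where "A = cf_quot x (Suc k)"
    define d where "d = cf_quot x (Suc (Suc k)) - cf_quot x (Suc k)"
    have xG: "x \<in> Gs \<sigma> N" using x by (simp add: Ek_def)
    have ap: "\<forall>j<m. cf_quot x (Suc k + j) = A + j * d"
      using ap_digits[OF xG m2 Nm k k1] unfolding A_def d_def .
    have "\<forall>i. 1 \<le> i \<and> i \<le> k + m \<longrightarrow> cf_quot x i = ext A d i"
    proof (intro allI impI)
      fix i assume i: "1 \<le> i \<and> i \<le> k + m"
      show "cf_quot x i = ext A d i"
      proof (cases "i \<le> k")
        case True thus ?thesis using x i by (auto simp: Ek_def ext_def)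
      next
        case False
        hence "i = Suc k + (i - k - 1)" "i - k - 1 < m" using i by auto
        thus ?thesis using ap False i unfolding ext_def by (metis not_le)
      qed
    qed
    hence "x \<in> Ek \<sigma> N (k + m) (ext A d)" using xG by (simp add: Ek_def)
    thus "x \<in> (\<Union>A. \<Union>d. Ek \<sigma> N (k + m) (ext A d))" by blast
  qed
  have each: "hausdorff_pre s \<delta> (Ek \<sigma> N (k + m) (ext A d)) \<le> ennreal (w * C) * ennreal (fA A) * ennreal (hd d)" for A d
  proof (cases "b < A \<and> 0 < d")
    case False
    have "Ek \<sigma> N (k + m) (ext A d) = {}"
    proof (rule ccontr)
      assume "Ek \<sigma> N (k + m) (ext A d) \<noteq> {}"
      then obtain x where x: "x \<in> Ek \<sigma> N (k + m) (ext A d)" by blast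
      have xG: "x \<in> Gs \<sigma> N" using x by (simp add: Ek_def)
      have c0: "cf_quot x k = b" using x k1 unfolding Ek_def ext_def b_def by auto
      have c1: "cf_quot x (Suc k) = A" using x m2 unfolding Ek_def ext_def by auto
      have c2: "cf_quot x (Suc (Suc k)) = A + d" using x m2 unfolding Ek_def ext_def by auto
      have "cf_quot x k < cf_quot x (Suc k)" using xG k1 by (rule Gs_incr)
      moreover have "cf_quot x (Suc k) < cf_quot x (Suc (Suc k))" using xG by (rule Gs_incr) simp
      ultimately show False using False c0 c1 c2 by simp
    qed
    thus ?thesis using hp_empty[OF d0] by simp
  next
    case True
    have A1: "1 \<le> A" and dd1: "1 \<le> d" using True b1 by auto
    have pos': "\<forall>i. 1 \<le> i \<and> i \<le> k + m \<longrightarrow> 1 \<le> ext A d i"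
      using pos A1 unfolding ext_def by auto
    have H: "hausdorff_pre s \<delta> (Ek \<sigma> N (k + m) (ext A d)) \<le>
        ennreal (Prd (ext A d) (k + m) powr (- (2 * s)) * C * real (ext A d (k + m)) powr (- g))"
      using Q pos' unfolding Qp_def by blast
    have Pe: "Prd (ext A d) (k + m) = Prd u k * (\<Prod>j<m. real (A + j * d))"
      unfolding Prd_def prod_split_add
    proof (intro arg_cong2[where f = "(*)"])
      show "(\<Prod>i<k. real (ext A d (Suc i))) = (\<Prod>i<k. real (u (Suc i)))"
        by (intro prod.cong) (auto simp: ext_def)
      show "(\<Prod>j<m. real (ext A d (Suc (k + j)))) = (\<Prod>j<m. real (A + j * d))"
        by (intro prod.cong) (auto simp: ext_def)
    qed
    have el: "ext A d (k + m) = A + (m - 1) * d" using m2 unfolding ext_def by auto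
    have Pi: "real A ^ (m - K) * real d ^ K \<le> (\<Prod>j<m. real (A + j * d))"
    proof -
      have e: "m - K = Suc (m - K - 1)" "m = Suc (K + (m - K - 1))" using Km by auto
      show ?thesis using prod_lower[OF A1 dd1, of "m - K - 1" K] by (subst (1 2) e) simp
    qed
    have "Prd (ext A d) (k + m) powr (- (2 * s)) * C * real (ext A d (k + m)) powr (- g)
       \<le> w * C * (real A powr (- E) * real d powr (- (2 * s * real K)))"
      unfolding Pe el w_def E_def
      by (rule block_term_bound[OF P0 A1 dd1 C s g0 Pi]) simp
    also have "\<dots> = w * C * fA A * hd d" using True by (simp add: fA_def hd_def)
    also have "ennreal \<dots> = ennreal (w * C) * ennreal (fA A) * ennreal (hd d)"
      using w0 C by (simp add: ennreal_mult fA_def hd_def)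
    finally show ?thesis using H by (meson ennreal_leI order_trans)
  qed
  define S where "S = (\<Sum>d. ennreal (hd d))"
  have S2: "S \<le> 2" unfolding S_def hd_def using sK by (intro zeta_ennreal)
  have SA: "(\<Sum>A. ennreal (fA A)) \<le> ennreal (real b powr (1 - E) / (E - 1))"
    unfolding fA_def using E3 b1 unfolding E_def by (intro tail_ennreal) auto
  have "hausdorff_pre s \<delta> (Ek \<sigma> N k u) \<le> hausdorff_pre s \<delta> (\<Union>A. \<Union>d. Ek \<sigma> N (k + m) (ext A d))"
    by (rule hp_mono[OF cover])
  also have "\<dots> \<le> (\<Sum>A. hausdorff_pre s \<delta> (\<Union>d. Ek \<sigma> N (k + m) (ext A d)))"
    by (rule hp_sub)
  also have "\<dots> \<le> (\<Sum>A. \<Sum>d. hausdorff_pre s \<delta> (Ek \<sigma> N (k + m) (ext A d)))"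
    by (intro suminf_le hp_sub summableI)
  also have "\<dots> \<le> (\<Sum>A. \<Sum>d. ennreal (w * C) * ennreal (fA A) * ennreal (hd d))"
    by (intro suminf_le each summableI)
  also have "\<dots> = (\<Sum>A. ennreal (w * C) * ennreal (fA A) * S)"
    unfolding S_def by simp
  also have "\<dots> = ennreal (w * C) * (\<Sum>A. ennreal (fA A)) * S"
    by (simp add: mult.commute mult.left_commute)
  also have "\<dots> \<le> ennreal (w * C) * ennreal (real b powr (1 - E) / (E - 1)) * 2"
    by (intro mult_mono SA S2 mult_left_mono) auto
  also have "\<dots> = ennreal (w * C * (real b powr (1 - E) / (E - 1)) * 2)"
  proof -
    have "ennreal (w * C) * ennreal (real b powr (1 - E) / (E - 1)) = ennreal (w * C * (real b powr (1 - E) / (E - 1)))"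
      by (rule ennreal_mult'[symmetric]) (use w0 C in simp)
    moreover have "ennreal (w * C * (real b powr (1 - E) / (E - 1))) * ennreal 2 = ennreal (w * C * (real b powr (1 - E) / (E - 1)) * 2)"
      by (rule ennreal_mult''[symmetric]) simp
    ultimately show ?thesis by simp
  qed
  also have "\<dots> = ennreal (w * (2 * C / (E - 1)) * real b powr (- (E - 1)))"
  proof -
    have E3': "3 \<le> E" using E3 unfolding E_def .
    have "1 - E = - (E - 1)" by simp
    thus ?thesis using E3' by (simp add: field_simps)
  qed
  finally show "hausdorff_pre s \<delta> (Ek \<sigma> N k u) \<le> ennreal (Prd u k powr (- (2 * s)) * (2 * C / (2 * s * real (m - K) + g - 1)) * real (u k) powr (- (2 * s * real (m - K) + g - 1)))"
    unfolding w_def b_def E_def .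
qed

lemma Q_mono:
  assumes Q: "Qp \<sigma> N s \<delta> k g C" and k: "1 \<le> k" and g: "g' \<le> g" and C: "C \<le> C'" and C0: "0 \<le> C"
  shows "Qp \<sigma> N s \<delta> k g' C'"
  unfolding Qp_def
proof (intro allI impI)
  fix u :: "nat \<Rightarrow> nat" assume pos: "\<forall>i. 1 \<le> i \<and> i \<le> k \<longrightarrow> 1 \<le> u i"
  have u1: "1 \<le> real (u k)" using pos k by auto
  have "hausdorff_pre s \<delta> (Ek \<sigma> N k u) \<le> ennreal (Prd u k powr (- (2 * s)) * C * real (u k) powr (- g))"
    using Q pos unfolding Qp_def by blast
  also have "\<dots> \<le> ennreal (Prd u k powr (- (2 * s)) * C' * real (u k) powr (- g'))"
  proof (intro ennreal_leI mult_mono)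
    show "real (u k) powr (- g) \<le> real (u k) powr (- g')" using u1 g by (intro powr_mono) auto
  qed (use C C0 in auto)
  finally show "hausdorff_pre s \<delta> (Ek \<sigma> N k u) \<le> ennreal (Prd u k powr (- (2 * s)) * C' * real (u k) powr (- g'))" .
qed

lemma Q_gap:
  assumes s: "s \<le> 1/2" and C: "0 \<le> C" and d0: "0 \<le> \<delta>"
  shows "1 \<le> k \<Longrightarrow> 1 \<le> g - real G * (1 - 2 * s) \<Longrightarrow> Qp \<sigma> N s \<delta> (k + G) g C \<Longrightarrow> Qp \<sigma> N s \<delta> k (g - real G * (1 - 2 * s)) C"
proof (induction G arbitrary: k)
  case 0 thus ?case by simp
next
  case (Suc G)
  have "Qp \<sigma> N s \<delta> (Suc k + G) g C" using Suc.prems(3) by simp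
  moreover have "1 \<le> g - real G * (1 - 2 * s)" using Suc.prems(2) s by (simp add: algebra_simps)
  ultimately have "Qp \<sigma> N s \<delta> (Suc k) (g - real G * (1 - 2 * s)) C"
    using Suc.IH[of "Suc k"] by simp
  hence "Qp \<sigma> N s \<delta> k (g - real G * (1 - 2 * s) + 2 * s - 1) C"
    using Suc.prems(1,2) C d0 by (intro Q_free) (auto simp: algebra_simps)
  moreover have "g - real G * (1 - 2 * s) + 2 * s - 1 = g - real (Suc G) * (1 - 2 * s)"
    by (simp add: algebra_simps)
  ultimately show ?case by simp
qed

lemma Q_start:
  assumes Q: "Qp \<sigma> N s \<delta> 1 g C" and g: "2 \<le> g + 2 * s" and C: "0 \<le> C" and d0: "0 \<le> \<delta>"
  shows "hausdorff_pre s \<delta> (Gs \<sigma> N) \<le> ennreal (2 * C)"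
proof -
  define f where "f a = (if 0 < a then real a powr (- (g + 2 * s)) else 0)" for a :: nat
  have cover: "Gs \<sigma> N \<subseteq> (\<Union>a. Ek \<sigma> N 1 (\<lambda>_. a))"
  proof
    fix x assume "x \<in> Gs \<sigma> N"
    hence "x \<in> Ek \<sigma> N 1 (\<lambda>_. cf_quot x 1)" by (auto simp: Ek_def)
    thus "x \<in> (\<Union>a. Ek \<sigma> N 1 (\<lambda>_. a))" by blast
  qed
  have each: "hausdorff_pre s \<delta> (Ek \<sigma> N 1 (\<lambda>_. a)) \<le> ennreal C * ennreal (f a)" for a
  proof (cases "0 < a")
    case False
    have "Ek \<sigma> N 1 (\<lambda>_. a) = {}"
    proof (rule ccontr)
      assume "Ek \<sigma> N 1 (\<lambda>_. a) \<noteq> {}"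
      then obtain x where x: "x \<in> Ek \<sigma> N 1 (\<lambda>_. a)" by blast
      hence "1 \<le> cf_quot x 1" by (intro cf_quot_pos) (auto simp: Ek_def Gs_def)
      moreover have "cf_quot x 1 = a" using x by (auto simp: Ek_def)
      ultimately show False using False by simp
    qed
    thus ?thesis using hp_empty[OF d0] by simp
  next
    case True
    have "hausdorff_pre s \<delta> (Ek \<sigma> N 1 (\<lambda>_. a)) \<le> ennreal (Prd (\<lambda>_. a) 1 powr (- (2 * s)) * C * real a powr (- g))"
    proof -
      have "\<forall>i. 1 \<le> i \<and> i \<le> 1 \<longrightarrow> 1 \<le> (\<lambda>_::nat. a) i" using True by simp
      thus ?thesis using Q unfolding Qp_def by (elim allE[of _ "\<lambda>_. a"]) blast
    qed
    also have "Prd (\<lambda>_. a) 1 powr (- (2 * s)) * C * real a powr (- g) = C * f a"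
      using True unfolding Prd_def f_def by (simp add: powr_add[symmetric] algebra_simps)
    also have "ennreal (C * f a) = ennreal C * ennreal (f a)" using C by (rule ennreal_mult')
    finally show ?thesis .
  qed
  have "hausdorff_pre s \<delta> (Gs \<sigma> N) \<le> hausdorff_pre s \<delta> (\<Union>a. Ek \<sigma> N 1 (\<lambda>_. a))"
    by (rule hp_mono[OF cover])
  also have "\<dots> \<le> (\<Sum>a. hausdorff_pre s \<delta> (Ek \<sigma> N 1 (\<lambda>_. a)))" by (rule hp_sub)
  also have "\<dots> \<le> (\<Sum>a. ennreal C * ennreal (f a))" by (intro suminf_le each summableI)
  also have "\<dots> = ennreal C * (\<Sum>a. ennreal (f a))" by simp
  also have "\<dots> \<le> ennreal C * 2" unfolding f_def using g by (intro mult_left_mono zeta_ennreal) auto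
  also have "\<dots> = ennreal (2 * C)" by (simp add: ennreal_mult'' mult.commute)
  finally show ?thesis .
qed

lemma chain:
  fixes \<sigma> :: "nat \<Rightarrow> nat"
  assumes s: "0 < s" "s < 1/2" and sK: "2 \<le> 2 * s * real K" and d0: "0 \<le> \<delta>"
    and gap\<sigma>: "\<forall>m\<ge>1. \<sigma> m + m \<le> \<sigma> (Suc m)" and pos\<sigma>: "\<forall>m\<ge>1. 0 < \<sigma> m"
    and good: "\<forall>m\<ge>N. 2 \<le> m \<and> K < m \<and> 2 \<le> \<sigma> m \<and> 3 \<le> 2 * s * real (m - K) \<and>
                 (1 - 2 * s) * real (\<sigma> m - \<sigma> (m-1) - (m-1)) \<le> 2 * s * real (m - K) - 1"
    and nN: "N < n"
    and final: "(1 - 2 * s) * real (\<sigma> n - \<sigma> (n-1) - (n-1)) \<le> 2 * s * real (n - K) - 1 - (real (\<sigma> N) + 2)"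
    and dlt: "1 / (real (\<sigma> n + n - 1))^2 \<le> \<delta>"
  shows "hausdorff_pre s \<delta> (Gs \<sigma> N) \<le> ennreal (2 * (2 / (2 * s * real (n - K) - 1)))"
proof -
  define e where "e m = \<sigma> m + m - 1" for m
  define \<Gamma> where "\<Gamma> = real (\<sigma> N) + 2"
  define Cn where "Cn = 2 / (2 * s * real (n - K) - 1)"
  have gn: "2 \<le> n \<and> K < n \<and> 2 \<le> \<sigma> n \<and> 3 \<le> 2 * s * real (n - K)" using good nN by auto
  have gN: "2 \<le> N \<and> K < N \<and> 2 \<le> \<sigma> N \<and> 3 \<le> 2 * s * real (N - K)" using good by auto
  have h: "0 < 2 * s * real (n - K) - 1" using gn by linarith
  have Cn0: "0 < Cn" unfolding Cn_def by (rule divide_pos_pos[OF _ h]) simp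
  have \<Gamma>3: "4 \<le> \<Gamma>" unfolding \<Gamma>_def using gN by simp
  have epos: "Suc (\<sigma> m - 1) = \<sigma> m" "\<sigma> m - 1 + m = e m" "1 \<le> \<sigma> m - 1" if "N \<le> m" for m
    using good that unfolding e_def by auto
  have egap: "e (m - 1) + (\<sigma> m - \<sigma> (m-1) - (m-1)) = \<sigma> m - 1" "1 \<le> e (m - 1)" if "N < m" for m
  proof -
    have "1 \<le> m - 1" using that good by auto
    hence "\<sigma> (m-1) + (m-1) \<le> \<sigma> (Suc (m-1))" using gap\<sigma> by blast
    moreover have "Suc (m-1) = m" using that good by auto
    moreover have "2 \<le> \<sigma> m" using good that by auto
    moreover have "0 < \<sigma> (m-1)" using pos\<sigma> \<open>1 \<le> m - 1\<close> by blast
    ultimately show "e (m - 1) + (\<sigma> m - \<sigma> (m-1) - (m-1)) = \<sigma> m - 1" "1 \<le> e (m - 1)"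
      using \<open>1 \<le> m - 1\<close> unfolding e_def by auto
  qed
  have A: "Qp \<sigma> N s \<delta> (e n) 0 1"
    using dlt s gn unfolding e_def by (intro Q_end) auto
  have B: "Qp \<sigma> N s \<delta> (\<sigma> n - 1) (2 * s * real (n - K) - 1) Cn"
  proof -
    have "Qp \<sigma> N s \<delta> (\<sigma> n - 1) (2 * s * real (n - K) + 0 - 1) (2 * 1 / (2 * s * real (n - K) + 0 - 1))"
      using gn nN sK s d0 A epos[of n]
      by (intro Q_block[where N = N and m = n and K = K]) auto
    thus ?thesis unfolding Cn_def by simp
  qed
  have C: "Qp \<sigma> N s \<delta> (e (n - 1)) \<Gamma> Cn"
  proof -
    let ?G = "\<sigma> n - \<sigma> (n-1) - (n-1)"
    have "Qp \<sigma> N s \<delta> (e (n - 1)) (2 * s * real (n - K) - 1 - real ?G * (1 - 2 * s)) Cn"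
      using egap[OF nN] B final \<Gamma>3 s Cn0 d0 unfolding \<Gamma>_def
      by (intro Q_gap) (auto simp: algebra_simps)
    thus ?thesis using egap[OF nN] Cn0 final unfolding \<Gamma>_def
      by (elim Q_mono) (auto simp: algebra_simps)
  qed
  have D: "\<forall>j. j \<le> n - 1 - N \<longrightarrow> Qp \<sigma> N s \<delta> (e (n - 1 - j)) \<Gamma> Cn"
  proof (intro allI)
    fix j show "j \<le> n - 1 - N \<longrightarrow> Qp \<sigma> N s \<delta> (e (n - 1 - j)) \<Gamma> Cn"
    proof (induction j)
      case 0 thus ?case using C by simp
    next
      case (Suc j)
      show ?case
      proof
        assume j: "Suc j \<le> n - 1 - N"
        define m where "m = n - 1 - j"
        have mN: "N < m" using j unfolding m_def by auto
        have IH: "Qp \<sigma> N s \<delta> (e m) \<Gamma> Cn" using Suc.IH j unfolding m_def by auto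
        have gm: "2 \<le> m \<and> K < m \<and> 2 \<le> \<sigma> m \<and> 3 \<le> 2 * s * real (m - K) \<and>
                 (1 - 2 * s) * real (\<sigma> m - \<sigma> (m-1) - (m-1)) \<le> 2 * s * real (m - K) - 1"
          using good mN less_imp_le by blast
        define E where "E = 2 * s * real (m - K) + \<Gamma>"
        have "3 \<le> 2 * s * real (m - K)" using gm by blast
        hence E3: "3 \<le> E" unfolding E_def using \<Gamma>3 by linarith
        have "Qp \<sigma> N s \<delta> (\<sigma> m - 1) (2 * s * real (m - K) + \<Gamma> - 1) (2 * Cn / (2 * s * real (m - K) + \<Gamma> - 1))"
          using gm mN sK s d0 IH epos[of m] \<Gamma>3 Cn0
          by (intro Q_block[where N = N and m = m and K = K]) auto
        hence Bm: "Qp \<sigma> N s \<delta> (\<sigma> m - 1) (E - 1) Cn"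
        proof (elim Q_mono)
          have "2 * Cn / (E - 1) \<le> Cn * 1" using E3 Cn0 by (simp add: field_simps)
          thus "2 * Cn / (2 * s * real (m - K) + \<Gamma> - 1) \<le> Cn" unfolding E_def by simp
        qed (use epos[of m] mN Cn0 E3 E_def in auto)
        let ?G = "\<sigma> m - \<sigma> (m-1) - (m-1)"
        have "Qp \<sigma> N s \<delta> (e (m - 1)) (E - 1 - real ?G * (1 - 2 * s)) Cn"
          using egap[OF mN] Bm gm \<Gamma>3 s Cn0 d0 unfolding E_def
          by (intro Q_gap) (auto simp: algebra_simps)
        hence "Qp \<sigma> N s \<delta> (e (m - 1)) \<Gamma> Cn"
          using egap[OF mN] Cn0 gm unfolding E_def
          by (elim Q_mono) (auto simp: algebra_simps)
        moreover have "m - 1 = n - 1 - Suc j" unfolding m_def by simp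
        ultimately show "Qp \<sigma> N s \<delta> (e (n - 1 - Suc j)) \<Gamma> Cn" by simp
      qed
    qed
  qed
  have DN: "Qp \<sigma> N s \<delta> (e N) \<Gamma> Cn"
    using D[rule_format, of "n - 1 - N"] nN by simp
  define E where "E = 2 * s * real (N - K) + \<Gamma>"
  have "3 \<le> 2 * s * real (N - K)" using gN by blast
  hence E3: "3 \<le> E" unfolding E_def using \<Gamma>3 by linarith
  have "Qp \<sigma> N s \<delta> (\<sigma> N - 1) (2 * s * real (N - K) + \<Gamma> - 1) (2 * Cn / (2 * s * real (N - K) + \<Gamma> - 1))"
    using gN sK s d0 DN epos[of N] \<Gamma>3 Cn0
    by (intro Q_block[where N = N and m = N and K = K]) auto
  hence BN0: "Qp \<sigma> N s \<delta> (\<sigma> N - 1) (E - 1) Cn"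
  proof (elim Q_mono)
    have "2 * Cn / (E - 1) \<le> Cn * 1" using E3 Cn0 by (simp add: field_simps)
    thus "2 * Cn / (2 * s * real (N - K) + \<Gamma> - 1) \<le> Cn" unfolding E_def by simp
  qed (use epos[of N] gN Cn0 E3 E_def in auto)
  have "1 + (\<sigma> N - 2) = \<sigma> N - 1" using gN by auto
  hence BN: "Qp \<sigma> N s \<delta> (1 + (\<sigma> N - 2)) (E - 1) Cn" using BN0 by simp
  have pre: "E - 1 - real (\<sigma> N - 2) * (1 - 2 * s) \<ge> 2"
  proof -
    define Y where "Y = real (\<sigma> N - 2) * (1 - 2 * s)"
    have r: "real (\<sigma> N - 2) = real (\<sigma> N) - 2" using gN by auto
    have "real (\<sigma> N - 2) * (1 - 2 * s) \<le> real (\<sigma> N - 2) * 1"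
      using s by (intro mult_left_mono) auto
    hence Y1: "Y \<le> real (\<sigma> N) - 2" unfolding Y_def r by simp
    have A0: "0 \<le> 2 * s * real (N - K)" using s by simp
    have "E - 1 - Y \<ge> 2" unfolding E_def \<Gamma>_def using Y1 A0 by linarith
    thus ?thesis unfolding Y_def .
  qed
  have "Qp \<sigma> N s \<delta> 1 (E - 1 - real (\<sigma> N - 2) * (1 - 2 * s)) Cn"
    using BN pre s Cn0 d0 by (intro Q_gap) auto
  hence "Qp \<sigma> N s \<delta> 1 2 Cn" using pre Cn0 by (elim Q_mono) auto
  hence "hausdorff_pre s \<delta> (Gs \<sigma> N) \<le> ennreal (2 * Cn)"
    using s Cn0 d0 by (intro Q_start) auto
  thus ?thesis unfolding Cn_def .
qed

lemma ev_real_ge: "\<exists>n0::nat. \<forall>n\<ge>n0. M \<le> real n"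
proof -
  obtain n0 :: nat where "M \<le> real n0" using real_arch_simple by blast
  thus ?thesis by (intro exI[of _ n0]) (auto intro: order_trans)
qed

lemma slack:
  fixes \<sigma> :: "nat \<Rightarrow> nat" and \<beta> s :: real and K :: nat
  assumes lim: "(\<lambda>n. (real (\<sigma> (Suc n)) - real (\<sigma> n)) / real n) \<longlonglongrightarrow> \<beta>"
    and beta: "\<beta> \<ge> 1" and st: "(\<beta> - 1) / (2 * \<beta>) < s" and s2: "s < 1/2"
    and gap\<sigma>: "\<forall>m\<ge>1. \<sigma> m + m \<le> \<sigma> (Suc m)" and pos\<sigma>: "\<forall>m\<ge>1. 0 < \<sigma> m"
  shows "\<exists>c1>0. \<exists>N0. \<forall>m\<ge>N0. (1 - 2 * s) * real (\<sigma> m - \<sigma> (m-1) - (m-1)) + c1 * real (m - 1) \<le> 2 * s * real (m - K) - 1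
            \<and> K < m \<and> 2 \<le> m \<and> 2 \<le> \<sigma> m \<and> 3 \<le> 2 * s * real (m - K)"
proof -
  have b0: "0 < \<beta>" using beta by simp
  have s0: "0 < s" using st beta by (smt (verit) divide_nonneg_pos)
  define c0 where "c0 = 2 * s * \<beta> - (\<beta> - 1)"
  have "\<beta> - 1 < s * (2 * \<beta>)" using st b0 by (simp add: divide_less_eq)
  hence c0p: "0 < c0" unfolding c0_def by (simp add: algebra_simps)
  define \<eta> where "\<eta> = c0 / 2"
  have "eventually (\<lambda>n. (real (\<sigma> (Suc n)) - real (\<sigma> n)) / real n < \<beta> + \<eta>) sequentially"
    using lim c0p unfolding \<eta>_def by (intro order_tendstoD(2)) auto
  then obtain J where J: "\<And>j. j \<ge> J \<Longrightarrow> (real (\<sigma> (Suc j)) - real (\<sigma> j)) / real j < \<beta> + \<eta>"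
    unfolding eventually_sequentially by blast
  define M where "M = real J + real K + 3 + 4 * (2 * s * real K + 1) / c0 + 3 / (2 * s)"
  obtain N0 where N0: "\<And>n. n \<ge> N0 \<Longrightarrow> M \<le> real n" using ev_real_ge[of M] by blast
  show ?thesis
  proof (intro exI[of _ "c0/4"] conjI exI[of _ N0] allI impI)
    show "0 < c0 / 4" using c0p by simp
    fix m assume m: "N0 \<le> m"
    have mM: "M \<le> real m" using N0 m by blast
    have t1: "0 \<le> 4 * (2 * s * real K + 1) / c0" using c0p s0 by simp
    have t2: "0 \<le> 3 / (2 * s)" using s0 by simp
    have mJ: "real J + real K + 3 \<le> real m" using mM t1 t2 unfolding M_def by linarith
    show mK: "K < m" and m2: "2 \<le> m" using mJ by auto
    define X where "X = real (m - 1)"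
    have X: "X = real m - 1" using m2 unfolding X_def by auto
    have j: "m - 1 \<ge> J" "1 \<le> m - 1" using mJ by auto
    have sm: "Suc (m - 1) = m" using m2 by simp
    have gp: "\<sigma> (m-1) + (m-1) \<le> \<sigma> m" using gap\<sigma> j(2) sm by metis
    have p1: "0 < \<sigma> (m - 1)" using pos\<sigma> j(2) by blast
    show "2 \<le> \<sigma> m" using gp p1 j(2) by linarith
    have "(real (\<sigma> m) - real (\<sigma> (m-1))) / X < \<beta> + \<eta>" using J[OF j(1)] sm unfolding X_def by metis
    moreover have X0: "0 < X" using j(2) unfolding X_def by simp
    ultimately have r: "real (\<sigma> m) - real (\<sigma> (m-1)) < (\<beta> + \<eta>) * X" by (simp add: divide_less_eq)
    define G where "G = real (\<sigma> m - \<sigma> (m-1) - (m-1))"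
    have G: "G = real (\<sigma> m) - real (\<sigma> (m-1)) - X" using gp unfolding G_def X_def by auto
    have G1: "G \<le> (\<beta> - 1 + \<eta>) * X" using r G by (simp add: algebra_simps)
    have f1: "(1 - 2 * s) * G \<le> (1 - 2 * s) * ((\<beta> - 1 + \<eta>) * X)"
      using G1 s2 by (intro mult_left_mono) auto
    have idt: "(1 - 2 * s) * ((\<beta> - 1 + \<eta>) * X) = 2 * s * X - c0 * X + (1 - 2 * s) * (\<eta> * X)"
      unfolding c0_def by (simp add: algebra_simps)
    have f2: "(1 - 2 * s) * (\<eta> * X) \<le> \<eta> * X"
      using X0 c0p s0 unfolding \<eta>_def by (simp add: mult_le_cancel_right1)
    have "4 * (2 * s * real K + 1) / c0 \<le> X" using mM t2 X unfolding M_def by linarith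
    hence f3: "2 * s * real K + 1 \<le> c0 / 4 * X" using c0p by (simp add: field_simps)
    have mKr: "real (m - K) = X + 1 - real K" using mK X by auto
    have "(1 - 2 * s) * G + c0 / 4 * X \<le> 2 * s * X - c0 / 4 * X"
      using f1 f2 idt unfolding \<eta>_def by linarith
    also have "\<dots> \<le> 2 * s * real (m - K) - 1" unfolding mKr using f3 s0 by (simp add: algebra_simps)
    finally show "(1 - 2 * s) * real (\<sigma> m - \<sigma> (m - 1) - (m - 1)) + c0 / 4 * real (m - 1) \<le> 2 * s * real (m - K) - 1"
      unfolding G_def X_def .
    have "3 / (2 * s) \<le> real (m - K)" using mM t1 mKr X unfolding M_def by linarith
    hence "3 \<le> real (m - K) * (2 * s)" using s0 by (simp add: divide_le_eq del: of_nat_diff)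
    thus "3 \<le> 2 * s * real (m - K)" by (simp only: mult.commute)
  qed
qed

lemma Gs_zero:
  fixes \<sigma> :: "nat \<Rightarrow> nat" and \<beta> s \<delta> :: real
  assumes lim: "(\<lambda>n. (real (\<sigma> (Suc n)) - real (\<sigma> n)) / real n) \<longlonglongrightarrow> \<beta>"
    and beta: "\<beta> \<ge> 1" and st: "(\<beta> - 1) / (2 * \<beta>) < s" and s2: "s < 1/2"
    and gap\<sigma>: "\<forall>m\<ge>1. \<sigma> m + m \<le> \<sigma> (Suc m)" and pos\<sigma>: "\<forall>m\<ge>1. 0 < \<sigma> m"
    and d: "0 < \<delta>"
  shows "\<exists>N0. \<forall>N\<ge>N0. hausdorff_pre s \<delta> (Gs \<sigma> N) = 0"
proof -
  have s0: "0 < s" using st beta by (smt (verit) divide_nonneg_pos)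
  define K where "K = nat \<lceil>1 / s\<rceil>"
  have "1 / s \<le> real K" unfolding K_def by linarith
  hence "1 \<le> s * real K" using s0 by (simp add: divide_le_eq mult.commute)
  hence sK: "2 \<le> 2 * s * real K" by simp
  obtain c1 N0 where c1: "0 < c1" and N0: "\<And>m. m \<ge> N0 \<Longrightarrow>
      (1 - 2 * s) * real (\<sigma> m - \<sigma> (m-1) - (m-1)) + c1 * real (m - 1) \<le> 2 * s * real (m - K) - 1
      \<and> K < m \<and> 2 \<le> m \<and> 2 \<le> \<sigma> m \<and> 3 \<le> 2 * s * real (m - K)"
    using slack[OF lim beta st s2 gap\<sigma> pos\<sigma>, of K] by blast
  show ?thesis
  proof (intro exI[of _ N0] allI impI)
    fix N assume NN0: "N0 \<le> N"
    have good: "\<forall>m\<ge>N. 2 \<le> m \<and> K < m \<and> 2 \<le> \<sigma> m \<and> 3 \<le> 2 * s * real (m - K) \<and>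
                 (1 - 2 * s) * real (\<sigma> m - \<sigma> (m-1) - (m-1)) \<le> 2 * s * real (m - K) - 1"
    proof (intro allI impI)
      fix m assume "N \<le> m"
      hence h: "(1 - 2 * s) * real (\<sigma> m - \<sigma> (m-1) - (m-1)) + c1 * real (m - 1) \<le> 2 * s * real (m - K) - 1
      \<and> K < m \<and> 2 \<le> m \<and> 2 \<le> \<sigma> m \<and> 3 \<le> 2 * s * real (m - K)"
        using N0[of m] NN0 \<open>N \<le> m\<close> by linarith
      have "0 \<le> c1 * real (m - 1)" using c1 by simp
      thus "2 \<le> m \<and> K < m \<and> 2 \<le> \<sigma> m \<and> 3 \<le> 2 * s * real (m - K) \<and>
                 (1 - 2 * s) * real (\<sigma> m - \<sigma> (m-1) - (m-1)) \<le> 2 * s * real (m - K) - 1"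
        using h by linarith
    qed
    show "hausdorff_pre s \<delta> (Gs \<sigma> N) = 0"
    proof (rule antisym[OF ennreal_le_epsilon zero_le])
      fix \<epsilon> :: real assume \<epsilon>: "0 < \<epsilon>"
      define M where "M = real N + 2 + (real (\<sigma> N) + 2) / c1 + 1 / \<delta> + real K + (4 / \<epsilon> + 1) / (2 * s)"
      obtain n0 where n0: "\<And>n. n \<ge> n0 \<Longrightarrow> M \<le> real n" using ev_real_ge[of M] by blast
      define n where "n = n0"
      have nM: "M \<le> real n" using n0 unfolding n_def by blast
      have t1: "0 \<le> (real (\<sigma> N) + 2) / c1" using c1 by simp
      have t2: "0 \<le> 1 / \<delta>" using d by simp
      have t3: "0 \<le> (4 / \<epsilon> + 1) / (2 * s)" using \<epsilon> s0 by simp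
      have nN: "N < n" using nM t1 t2 t3 unfolding M_def by linarith
      have gn: "(1 - 2 * s) * real (\<sigma> n - \<sigma> (n-1) - (n-1)) + c1 * real (n - 1) \<le> 2 * s * real (n - K) - 1
          \<and> K < n \<and> 2 \<le> n \<and> 2 \<le> \<sigma> n \<and> 3 \<le> 2 * s * real (n - K)"
        using N0[of n] NN0 nN by linarith
      have n1: "real (n - 1) = real n - 1" using gn by auto
      have "(real (\<sigma> N) + 2) / c1 \<le> real (n - 1)" using nM t2 t3 n1 unfolding M_def by linarith
      hence cc: "real (\<sigma> N) + 2 \<le> c1 * real (n - 1)" using c1 by (simp add: divide_le_eq mult.commute del: of_nat_diff)
      have final: "(1 - 2 * s) * real (\<sigma> n - \<sigma> (n-1) - (n-1)) \<le> 2 * s * real (n - K) - 1 - (real (\<sigma> N) + 2)"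
        using gn cc by linarith
      have dlt: "1 / (real (\<sigma> n + n - 1))^2 \<le> \<delta>"
      proof -
        have "real n \<le> real (\<sigma> n + n - 1)" using gn by auto
        moreover have "1 \<le> real n" using gn by auto
        ultimately have R: "real n \<le> real (\<sigma> n + n - 1)" "1 \<le> real n" .
        define R where "R = real (\<sigma> n + n - 1)"
        have "R * 1 \<le> R * R" using R unfolding R_def[symmetric] by (intro mult_left_mono) auto
        hence "real n \<le> R * R" using R unfolding R_def[symmetric] by linarith
        hence "real n \<le> R^2" by (simp add: power2_eq_square)
        moreover have p: "0 < real n" using R by linarith
        ultimately have "0 < R^2 * real n" by (intro mult_pos_pos) linarith+
        hence "1 / R^2 \<le> 1 / real n" using \<open>real n \<le> R^2\<close> by (intro divide_left_mono) auto
        hence "1 / (real (\<sigma> n + n - 1))^2 \<le> 1 / real n" unfolding R_def .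
        also have "1 / real n \<le> \<delta>"
        proof -
          have "1 / \<delta> \<le> real n" using nM t1 t3 unfolding M_def by linarith
          thus ?thesis using d \<open>1 \<le> real n\<close> by (simp add: divide_le_eq mult.commute)
        qed
        finally show ?thesis .
      qed
      have "hausdorff_pre s \<delta> (Gs \<sigma> N) \<le> ennreal (2 * (2 / (2 * s * real (n - K) - 1)))"
        using s0 s2 sK d gap\<sigma> pos\<sigma> good nN final dlt by (intro chain) auto
      also have "2 * (2 / (2 * s * real (n - K) - 1)) \<le> \<epsilon>"
      proof -
        have nK: "real (n - K) = real n - real K" using gn by auto
        have "(4 / \<epsilon> + 1) / (2 * s) \<le> real (n - K)" using nM t1 t2 nK unfolding M_def by linarith
        hence "4 / \<epsilon> + 1 \<le> real (n - K) * (2 * s)" using s0 by (simp add: divide_le_eq del: of_nat_diff)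
        hence a: "4 / \<epsilon> \<le> 2 * s * real (n - K) - 1" by (simp add: algebra_simps del: of_nat_diff)
        have "0 < 4 / \<epsilon>" using \<epsilon> by simp
        define D where "D = 2 * s * real (n - K) - 1"
        have a': "4 / \<epsilon> \<le> D" using a unfolding D_def .
        have "0 < D * (4 / \<epsilon>)" using \<open>0 < 4 / \<epsilon>\<close> a' by (intro mult_pos_pos) linarith+
        hence "4 / D \<le> 4 / (4 / \<epsilon>)" using a' by (intro divide_left_mono) auto
        hence "4 / (2 * s * real (n - K) - 1) \<le> 4 / (4 / \<epsilon>)" unfolding D_def .
        thus ?thesis using \<epsilon> by simp
      qed
      hence "ennreal (2 * (2 / (2 * s * real (n - K) - 1))) \<le> 0 + ennreal \<epsilon>" by (simp add: ennreal_leI)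
      finally show "hausdorff_pre s \<delta> (Gs \<sigma> N) \<le> 0 + ennreal \<epsilon>" .
    qed
  qed
qed

theorem proposition3p2:
  fixes \<sigma> :: "nat \<Rightarrow> nat" and \<beta> :: real
  assumes pos: "\<forall>n\<ge>1. 0 < \<sigma> n"
    and incr: "\<forall>n\<ge>1. \<sigma> n < \<sigma> (Suc n)"
    and gap: "\<forall>n\<ge>1. \<sigma> (Suc n) \<ge> \<sigma> n + n"
    and lim: "(\<lambda>n. (real (\<sigma> (Suc n)) - real (\<sigma> n)) / real n) \<longlonglongrightarrow> \<beta>"
    and beta: "\<beta> \<ge> 1"
  shows "hausdorff_dim (G_set \<sigma>) \<le> ereal ((\<beta> - 1) / (2 * \<beta>))"
proof -
  define t where "t = (\<beta> - 1) / (2 * \<beta>)"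
  have t0: "0 \<le> t" unfolding t_def using beta by simp
  have t2: "t < 1/2" unfolding t_def using beta by (simp add: divide_less_eq)
  have gap': "\<forall>m\<ge>1. \<sigma> m + m \<le> \<sigma> (Suc m)" using gap by blast
  have Hs: "hausdorff_measure s (G_set \<sigma>) = 0" if st: "t < s" and s2: "s < 1/2" for s
  proof -
    have "hausdorff_pre s \<delta> (G_set \<sigma>) = 0" if d: "0 < \<delta>" for \<delta>
    proof -
      obtain N0 where N0: "\<And>N. N \<ge> N0 \<Longrightarrow> hausdorff_pre s \<delta> (Gs \<sigma> N) = 0"
        using Gs_zero[OF lim beta st[unfolded t_def] s2 gap' pos d] by blast
      have sub: "G_set \<sigma> \<subseteq> (\<Union>M. Gs \<sigma> (max M N0))"
      proof
        fix x assume x: "x \<in> G_set \<sigma>"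
        hence xJ: "x \<in> J_set" and ev: "\<forall>\<^sub>F n in sequentially. arith_prog (cf_quot x) (\<sigma> n) n"
          by (auto simp: G_set_def)
        obtain M where M: "\<And>m. m \<ge> M \<Longrightarrow> arith_prog (cf_quot x) (\<sigma> m) m"
          using ev unfolding eventually_sequentially by blast
        have "x \<in> Gs \<sigma> (max M N0)" using xJ M unfolding Gs_def J_set_def Xs_def by auto
        thus "x \<in> (\<Union>M. Gs \<sigma> (max M N0))" by blast
      qed
      have "hausdorff_pre s \<delta> (G_set \<sigma>) \<le> hausdorff_pre s \<delta> (\<Union>M. Gs \<sigma> (max M N0))"
        by (rule hp_mono[OF sub])
      also have "\<dots> \<le> (\<Sum>M. hausdorff_pre s \<delta> (Gs \<sigma> (max M N0)))" by (rule hp_sub)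
      also have "\<dots> = 0" using N0 by simp
      finally show ?thesis by simp
    qed
    hence "(SUP \<delta>\<in>{0<..}. hausdorff_pre s \<delta> (G_set \<sigma>)) = (SUP \<delta>\<in>{(0::real)<..}. (0::ennreal))"
      by (intro SUP_cong) auto
    also have "\<dots> = 0" by simp
    finally show ?thesis unfolding hausdorff_measure_def .
  qed
  show ?thesis
    unfolding hausdorff_dim_def t_def[symmetric]
  proof (rule dense_ge_bounded[of "ereal t" "ereal (1/2)"])
    show "ereal t < ereal (1/2)" using t2 by simp
  next
    fix w assume w: "ereal t < w" "w < ereal (1/2)"
    then obtain r where r: "w = ereal r" by (cases w) auto
    have tr: "t < r" "r < 1/2" using w r by auto
    have "ereal r \<in> {ereal s |s. 0 \<le> s \<and> hausdorff_measure s (G_set \<sigma>) = 0}"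
      using tr t0 Hs by auto
    thus "Inf {ereal s |s. 0 \<le> s \<and> hausdorff_measure s (G_set \<sigma>) = 0} \<le> w"
      unfolding r by (rule Inf_lower)
  qed
qed

end
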